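(* Let $\mathcal{X}\subseteq\mathbb{R}^d$ be nonempty, closed and convex, and let $f=\frac1n\sum_{i=1}^nf_i$ with each $f_i:\mathbb{R}^d\to\mathbb{R}$ differentiable; assume $\operatorname{arg\,min}_{x\in\mathcal{X}}f(x)$ is nonempty and that each $f_i$ has a constrained minimizer $x_{\star,i}\in\operatorname{arg\,min}_{x\in\mathcal{X}}f_i(x)$. Let $x_k\in\mathcal{X}$, let $i_k\in\{1,\dots,n\}$ be a given (realized) index and $g_{i_k}:=\nabla f_{i_k}(x_k)$. Assume $g_{i_k}\ne0$ and $0<t_k\le\frac{\langle g_{i_k},x_k-x_{\star,i_k}\rangle}{\|g_{i_k}\|}$, and let $x_{k+1}\in\operatorname{arg\,min}_{z\in\mathcal{X}\cap\mathcal{B}(x_k,t_k)}\langle g_{i_k},z\rangle$. Then $t_k\le\|x_k-x_{\star,i_k}\|$, $\|x_{k+1}-x_k\|=t_k$, and $\|x_{k+1}-x_{\star,i_k}\|^2\le\|x_k-x_{\star,i_k}\|^2-t_k^2$.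
   Context: $\|\cdot\|$ is the Euclidean norm, $\mathcal{B}(x,t):=\{y:\|y-x\|\le t\}$. *)

theory Defs
  imports "HOL-Analysis.Analysis"
begin

definition argmin_on :: "'a set \<Rightarrow> ('a \<Rightarrow> real) \<Rightarrow> 'a set" where
  "argmin_on S h = {x \<in> S. \<forall>y\<in>S. h x \<le> h y}"

end

theory Submission
  imports Defs
begin

lemma norm_comb_sq:
  "(norm (t *\<^sub>R g + c *\<^sub>R (v::'a::euclidean_space)))\<^sup>2
       = t\<^sup>2 * (norm g)\<^sup>2 + 2 * t * c * (g \<bullet> v) + c\<^sup>2 * (norm v)\<^sup>2"
  unfolding power2_norm_eq_inner
  by (simp add: inner_add_left inner_add_right inner_commute[of v g] power2_eq_square algebra_simps)

lemma solve_comb: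
  assumes h: "tk *\<^sub>R g + c *\<^sub>R (v::'a::euclidean_space) = 0" and c: "c > 0"
  shows "v = - (tk / c) *\<^sub>R g"
proof -
  have "c *\<^sub>R v = - (tk *\<^sub>R g)" using h by (simp add: add_eq_0_iff2 add.commute)
  hence "(1/c) *\<^sub>R (c *\<^sub>R v) = (1/c) *\<^sub>R (- (tk *\<^sub>R g))" by simp
  thus ?thesis using c by simp
qed

theorem theorem10:
  fixes X :: "'a::euclidean_space set"
    and fs :: "nat \<Rightarrow> 'a \<Rightarrow> real"
    and n :: nat
    and xstar :: "nat \<Rightarrow> 'a"
    and xk xk1 g :: 'a
    and ik :: nat
    and tk :: real
  assumes X_ne: "X \<noteq> {}" and X_closed: "closed X" and X_convex: "convex X"
    and diff: "\<And>i x. i \<in> {1..n} \<Longrightarrow> fs i differentiable (at x)"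
    and argmin_f_ne: "argmin_on X (\<lambda>x. (1 / real n) * (\<Sum>i=1..n. fs i x)) \<noteq> {}"
    and xstar: "\<And>i. i \<in> {1..n} \<Longrightarrow> xstar i \<in> argmin_on X (fs i)"
    and xk: "xk \<in> X"
    and ik: "ik \<in> {1..n}"
    and grad: "(fs ik has_derivative (\<lambda>h. g \<bullet> h)) (at xk)"
    and g_ne: "g \<noteq> 0"
    and tk_pos: "0 < tk"
    and tk_le: "tk \<le> (g \<bullet> (xk - xstar ik)) / norm g"
    and xk1: "xk1 \<in> argmin_on (X \<inter> cball xk tk) (\<lambda>z. g \<bullet> z)"
  shows "tk \<le> norm (xk - xstar ik)
       \<and> norm (xk1 - xk) = tk
       \<and> (norm (xk1 - xstar ik))\<^sup>2 \<le> (norm (xk - xstar ik))\<^sup>2 - tk\<^sup>2"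
proof -
  define a where "a = xstar ik"
  define v where "v = xk1 - xk"
  define w where "w = a - xk1"
  have aX: "a \<in> X" using xstar[OF ik] unfolding a_def argmin_on_def by auto
  have gpos: "norm g > 0" using g_ne by simp
  have F0: "tk * norm g \<le> g \<bullet> (xk - a)" using tk_le gpos unfolding a_def
    by (simp add: pos_le_divide_eq)
  have CS1: "g \<bullet> (xk - a) \<le> norm g * norm (xk - a)" by (rule norm_cauchy_schwarz)
  have F1: "tk \<le> norm (xk - a)"
    using F0 CS1 gpos by (metis mult.commute mult_le_cancel_left_pos order_trans)
  have x1X: "xk1 \<in> X" and F2: "norm v \<le> tk"
    using xk1 unfolding argmin_on_def v_def by (auto simp: dist_norm norm_minus_commute)
  have F3: "\<And>z. z \<in> X \<Longrightarrow> norm (z - xk) \<le> tk \<Longrightarrow> g \<bullet> xk1 \<le> g \<bullet> z"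
    using xk1 unfolding argmin_on_def by (auto simp: dist_norm norm_minus_commute)
  have L: "g \<bullet> xk1 \<le> g \<bullet> a" if s: "0 < s" "s \<le> 1" "norm (v + s *\<^sub>R w) \<le> tk" for s
  proof -
    have "(1 - s) *\<^sub>R xk1 + s *\<^sub>R a \<in> X"
      using X_convex x1X aX s unfolding convex_def by auto
    moreover have "(1 - s) *\<^sub>R xk1 + s *\<^sub>R a - xk = v + s *\<^sub>R w"
      unfolding v_def w_def by (simp add: algebra_simps)
    ultimately have "g \<bullet> xk1 \<le> g \<bullet> ((1 - s) *\<^sub>R xk1 + s *\<^sub>R a)"
      using F3 s by auto
    hence "0 \<le> s * (g \<bullet> w)" unfolding w_def by (simp add: algebra_simps inner_diff_right)
    hence "0 \<le> g \<bullet> w" using s by (simp add: zero_le_mult_iff)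
    thus ?thesis unfolding w_def by (simp add: inner_diff_right)
  qed
  have CS2: "- (norm g * norm v) \<le> g \<bullet> v"
    using norm_cauchy_schwarz[of "-g" v] by simp
  have F4: "g \<bullet> a \<le> g \<bullet> xk - norm g * tk"
  proof -
    have "g \<bullet> (xk - a) = g \<bullet> xk - g \<bullet> a" by (simp add: inner_diff_right)
    thus ?thesis using F0 by (simp add: mult.commute)
  qed
  have gv: "g \<bullet> xk1 = g \<bullet> xk + g \<bullet> v" unfolding v_def by (simp add: inner_diff_right)
  have C2: "norm v = tk"
  proof (rule ccontr)
    assume "norm v \<noteq> tk"
    hence lt: "norm v < tk" using F2 by simp
    have "norm g * norm v < norm g * tk" using lt gpos by simp
    hence strict: "g \<bullet> a < g \<bullet> xk1" using CS2 F4 gv by linarith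
    define s where "s = min 1 ((tk - norm v) / (norm w + 1))"
    have s0: "0 < s" unfolding s_def using lt
      by (simp add: add_nonneg_pos divide_pos_pos)
    have s1: "s \<le> 1" unfolding s_def by auto
    have "s * (norm w + 1) \<le> tk - norm v"
    proof -
      have "s \<le> (tk - norm v) / (norm w + 1)" unfolding s_def by simp
      moreover have "norm w + 1 > 0" by (simp add: add_nonneg_pos)
      ultimately show ?thesis by (simp add: pos_le_divide_eq)
    qed
    hence "s * norm w \<le> tk - norm v" using s0 by (simp add: distrib_left)
    hence "norm (v + s *\<^sub>R w) \<le> tk"
      using norm_triangle_ineq[of v "s *\<^sub>R w"] s0 by simp
    with L[OF s0 s1] strict show False by simp
  qed
  have key: "tk\<^sup>2 \<le> v \<bullet> (a - xk)"
  proof (cases "0 \<le> v \<bullet> w")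
    case True
    have "a - xk = w + v" unfolding v_def w_def by simp
    hence "v \<bullet> (a - xk) = v \<bullet> w + (norm v)\<^sup>2"
      by (simp add: inner_add_right power2_norm_eq_inner)
    then show ?thesis using True C2 by simp
  next
    case False
    hence vw: "v \<bullet> w < 0" by simp
    hence wne: "w \<noteq> 0" by auto
    hence wpos: "(norm w)\<^sup>2 > 0" by simp
    define s where "s = min 1 (- (v \<bullet> w) / (norm w)\<^sup>2)"
    have s0: "0 < s" unfolding s_def using vw wpos by (simp add: divide_neg_pos)
    have s1: "s \<le> 1" unfolding s_def by auto
    have "s * (norm w)\<^sup>2 \<le> - (v \<bullet> w)"
    proof -
      have "s \<le> - (v \<bullet> w) / (norm w)\<^sup>2" unfolding s_def by simp
      thus ?thesis using wpos pos_le_divide_eq[of "(norm w)\<^sup>2" s "- (v \<bullet> w)"] by simp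
    qed
    hence "s * (s * (norm w)\<^sup>2) \<le> s * (- (v \<bullet> w))" using s0 by (intro mult_left_mono) auto
    moreover have "(norm (v + s *\<^sub>R w))\<^sup>2 = (norm v)\<^sup>2 + 2 * s * (v \<bullet> w) + s * (s * (norm w)\<^sup>2)"
      by (simp add: power2_norm_eq_inner inner_add_left inner_add_right inner_commute algebra_simps)
    ultimately have "(norm (v + s *\<^sub>R w))\<^sup>2 \<le> tk\<^sup>2" using C2 mult_pos_neg[OF s0 vw]
      by (simp add: algebra_simps)
    hence "norm (v + s *\<^sub>R w) \<le> tk" using tk_pos
      by (meson abs_le_square_iff abs_norm_cancel less_le power2_le_imp_le)
    from L[OF s0 s1 this] have "g \<bullet> xk1 \<le> g \<bullet> a" .
    moreover have "norm g * norm v = norm g * tk" using C2 by simp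
    ultimately have eq: "g \<bullet> v = - (norm g * tk)" using CS2 F4 gv by linarith
    have "(norm (tk *\<^sub>R g + norm g *\<^sub>R v))\<^sup>2
       = tk\<^sup>2 * (norm g)\<^sup>2 + 2 * tk * norm g * (g \<bullet> v) + (norm g)\<^sup>2 * (norm v)\<^sup>2"
      by (simp add: norm_comb_sq algebra_simps)
    also have "\<dots> = 0" using eq C2 by (simp add: algebra_simps power2_eq_square)
    finally have "tk *\<^sub>R g + norm g *\<^sub>R v = 0" by simp
    hence vv: "v = - (tk / norm g) *\<^sub>R g" using gpos by (rule solve_comb)
    have "v \<bullet> (a - xk) = (tk / norm g) * (g \<bullet> (xk - a))"
      unfolding vv by (simp add: inner_diff_right algebra_simps)
    also have "\<dots> \<ge> (tk / norm g) * (tk * norm g)"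
      using F0 tk_pos gpos by (intro mult_left_mono) auto
    finally show ?thesis using gpos by (simp add: power2_eq_square)
  qed
  have "(norm (xk1 - a))\<^sup>2 = (norm (v - (a - xk)))\<^sup>2" unfolding v_def by (simp add: algebra_simps)
  also have "\<dots> = (norm v)\<^sup>2 - 2 * (v \<bullet> (a - xk)) + (norm (a - xk))\<^sup>2"
    by (simp add: power2_norm_eq_inner inner_diff_left inner_diff_right inner_commute)
  also have "\<dots> \<le> (norm (xk - a))\<^sup>2 - tk\<^sup>2" using key C2 by (simp add: norm_minus_commute)
  finally show ?thesis using F1 C2 unfolding a_def v_def by simp
qed

end
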